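(* $\mathfrak{b}\leq\mathfrak{s}(\mathbb{R})$.
   Context: $\mathfrak{b}$ is the bounding number: the smallest cardinality of a family of functions $\omega\to\omega$ not bounded by a single function modulo finite (i.e. no $f$ with $g<^*f$ for all members $g$, where $g<^*f$ means $g(n)<f(n)$ for all but finitely many $n$). For infinite sets $U, A$, say $U$ splits $A$ if both $A\cap U$ and $A\setminus U$ are infinite. $\mathfrak{s}(\mathbb{R})$ is the smallest cardinality of a family $\mathcal{U}$ of open subsets of $\mathbb{R}$ (usual topology) such that every infinite $A\subseteq\mathbb{R}$ is split by some $U\in\mathcal{U}$. *)

theory Defs
  imports "HOL-Analysis.Analysis"
begin

definition less_star :: "(nat \<Rightarrow> nat) \<Rightarrow> (nat \<Rightarrow> nat) \<Rightarrow> bool" where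
  "less_star g f \<longleftrightarrow> finite {n. \<not> g n < f n}"

definition unbounded_family :: "(nat \<Rightarrow> nat) set \<Rightarrow> bool" where
  "unbounded_family F \<longleftrightarrow> \<not> (\<exists>f. \<forall>g\<in>F. less_star g f)"

definition splits :: "'a set \<Rightarrow> 'a set \<Rightarrow> bool" where
  "splits U A \<longleftrightarrow> infinite (A \<inter> U) \<and> infinite (A - U)"

definition splitting_open_family :: "real set set \<Rightarrow> bool" where
  "splitting_open_family \<U> \<longleftrightarrow>
     (\<forall>U\<in>\<U>. open U) \<and> (\<forall>A::real set. infinite A \<longrightarrow> (\<exists>U\<in>\<U>. splits U A))"

end

theory Submission
  imports Defs
begin

fun Qs :: "nat \<Rightarrow> real set" where
  "Qs 0 = {0}"
| "Qs (Suc m) = Qs m \<union> (\<lambda>p. fst p + 1 / (real (snd p) + 1)) ` (Qs m \<times> {..Suc m})"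

lemma Qs_finite: "finite (Qs m)"
  by (induction m) auto

lemma Qs_mono: "m \<le> n \<Longrightarrow> Qs m \<subseteq> Qs n"
  by (rule lift_Suc_mono_le[of Qs]) auto

definition gU :: "real set \<Rightarrow> real \<Rightarrow> nat" where
  "gU U x = (LEAST m. \<forall>k\<ge>m. x + 1 / (real k + 1) \<in> U)"

definition FU :: "real set \<Rightarrow> nat \<Rightarrow> nat" where
  "FU U m = Max (insert 0 (gU U ` (Qs m \<inter> U)))"

primrec br :: "(nat \<Rightarrow> nat) \<Rightarrow> nat \<Rightarrow> real \<times> nat" where
  "br f 0 = (0, 0)"
| "br f (Suc i) = (fst (br f i) + 1 / (real (f (snd (br f i))) + 1),
                   max (snd (br f i)) (f (snd (br f i))) + 1)"

lemma gU_prop: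
  assumes "open U" "x \<in> U" "k \<ge> gU U x"
  shows "x + 1 / (real k + 1) \<in> U"
proof -
  obtain e where e: "e > 0" "ball x e \<subseteq> U" using assms open_contains_ball by blast
  obtain m :: nat where m0: "inverse (real (Suc m)) < e"
    using reals_Archimedean[OF e(1)] by blast
  have m: "1 / (real m + 1) < e" using m0 by (simp add: inverse_eq_divide add.commute)
  have "\<forall>k\<ge>m. x + 1 / (real k + 1) \<in> U"
  proof (intro allI impI)
    fix k assume "m \<le> k"
    hence "1 / (real k + 1) \<le> 1 / (real m + 1)" by (simp add: frac_le)
    hence "dist x (x + 1 / (real k + 1)) < e" using m by (simp add: dist_real_def)
    thus "x + 1 / (real k + 1) \<in> U" using e(2) by auto
  qed
  hence "\<forall>k\<ge>gU U x. x + 1 / (real k + 1) \<in> U"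
    unfolding gU_def by (rule LeastI)
  thus ?thesis using assms(3) by blast
qed

lemma gU_le_FU: "x \<in> Qs m \<Longrightarrow> x \<in> U \<Longrightarrow> gU U x \<le> FU U m"
  unfolding FU_def by (rule Max_ge) (auto simp: Qs_finite)

lemma br_inv: "fst (br f i) \<in> Qs (snd (br f i)) \<and> i \<le> snd (br f i)"
proof (induction i)
  case 0
  then show ?case by simp
next
  case (Suc i)
  let ?x = "fst (br f i)" and ?M = "snd (br f i)"
  have "?x \<in> Qs (max ?M (f ?M))" using Suc Qs_mono[of ?M "max ?M (f ?M)"] by auto
  moreover have "f ?M \<le> Suc (max ?M (f ?M))" by simp
  ultimately have "?x + 1 / (real (f ?M) + 1) \<in> Qs (Suc (max ?M (f ?M)))"
    by (auto intro!: imageI[where f="\<lambda>p. fst p + 1 / (real (snd p) + 1)" and x="(?x, f ?M)", simplified])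
  then show ?case using Suc by (simp add: le_max_iff_disj)
qed

lemma br_strict: "strict_mono (\<lambda>i. fst (br f i))"
  by (rule strict_monoI_Suc) (simp add: add_pos_pos)

theorem theorem3p2:
  fixes \<U> :: "real set set"
  assumes "splitting_open_family \<U>"
  shows "\<exists>F :: (nat \<Rightarrow> nat) set. unbounded_family F \<and> (card_of F, card_of \<U>) \<in> ordLeq"
proof (intro exI conjI)
  show "(card_of (FU ` \<U>), card_of \<U>) \<in> ordLeq" by (rule card_of_image)
  show "unbounded_family (FU ` \<U>)"
    unfolding unbounded_family_def
  proof
    assume "\<exists>f. \<forall>g\<in>FU ` \<U>. less_star g f"
    then obtain f where f: "\<And>U. U \<in> \<U> \<Longrightarrow> less_star (FU U) f" by blast
    define x where "x = (\<lambda>i. fst (br f i))"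
    define A where "A = range x"
    have inj: "inj x" unfolding x_def using br_strict strict_mono_imp_inj_on by blast
    have "infinite A" unfolding A_def using inj by (simp add: range_inj_infinite)
    then obtain U where U: "U \<in> \<U>" "splits U A"
      using assms unfolding splitting_open_family_def by blast
    have oU: "open U" using U assms unfolding splitting_open_family_def by blast
    have "finite {n. \<not> FU U n < f n}" using f[OF U(1)] unfolding less_star_def .
    then obtain N where N: "\<And>n. n \<ge> N \<Longrightarrow> FU U n < f n"
    proof -
      obtain B where B: "\<forall>n\<in>{n. \<not> FU U n < f n}. n \<le> B"
        using \<open>finite {n. \<not> FU U n < f n}\<close> finite_nat_set_iff_bounded_le by blast
      show ?thesis using B that[of "Suc B"] by force
    qed
    have step: "x (Suc i) \<in> U" if "i \<ge> N" "x i \<in> U" for i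
    proof -
      let ?M = "snd (br f i)"
      have "i \<le> ?M" "x i \<in> Qs ?M" using br_inv[of f i] unfolding x_def by auto
      hence "gU U (x i) \<le> FU U ?M" using that gU_le_FU by blast
      also have "\<dots> < f ?M" using N \<open>i \<le> ?M\<close> that(1) by simp
      finally have "gU U (x i) \<le> f ?M" by simp
      from gU_prop[OF oU that(2) this] show ?thesis unfolding x_def by simp
    qed
    show False
    proof (cases "\<exists>i\<ge>N. x i \<in> U")
      case True
      then obtain i0 where i0: "i0 \<ge> N" "x i0 \<in> U" by blast
      have all: "x j \<in> U" if "j \<ge> i0" for j
        using that
      proof (induction j rule: dec_induct)
        case base thus ?case using i0 by simp
      next
        case (step j) thus ?case using \<open>\<And>i. i \<ge> N \<Longrightarrow> x i \<in> U \<Longrightarrow> x (Suc i) \<in> U\<close> i0 by simp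
      qed
      have "A - U \<subseteq> x ` {..<i0}" unfolding A_def using all by (auto, metis image_eqI lessThan_iff not_le)
      hence "finite (A - U)" by (rule finite_subset) simp
      thus False using U(2) unfolding splits_def by blast
    next
      case False
      have "A \<inter> U \<subseteq> x ` {..<N}" unfolding A_def using False by (auto, metis image_eqI lessThan_iff not_le)
      hence "finite (A \<inter> U)" by (rule finite_subset) simp
      thus False using U(2) unfolding splits_def by blast
    qed
  qed
qed

end
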